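(* Let $G$ be a graph of tree-width $\le w\in\mathbb N$, and let $\sigma$ be a finite star of separations of $G$ of order $\le w+1$ whose interior is finite. Suppose that all separations in $\sigma$ are left-$\ell$-robust for $\ell:=(w+1)^2(w+2)+w+1$. Then $\mathrm{torso}(\sigma)$ has tree-width $\le w$.
   Context: Graphs may be infinite. A separation of $G$ is a set $\{A,B\}$ with $A,B\subseteq V(G)$, $A\cup B=V(G)$ and no edge of $G$ between $A\setminus B$ and $B\setminus A$; its order is $|A\cap B|$; its orientations are $(A,B)$ and $(B,A)$, ordered by $(A,B)\le(C,D)$ iff $A\subseteq C$ and $B\supseteq D$. A star is a set $\sigma$ of oriented finite-order separations, not containing $(V(G),V(G))$, with $(A,B)\le(D,C)$ for any two distinct $(A,B),(C,D)\in\sigma$; its interior is $\mathrm{int}(\sigma)=\bigcap_{(A,B)\in\sigma}B$. $\mathrm{torso}(\sigma)$ is the graph obtained from $G[\mathrm{int}(\sigma)]$ by adding an edge $uv$ whenever distinct $u,v\in\mathrm{int}(\sigma)$ both lie in $A\cap B$ for some $(A,B)\in\sigma$. A finite-order $(A,B)$ is left-$\ell$-robust if there exist a set $U\subseteq A$ of size $\ell$ and pairwise disjoint paths $P_x\subseteq G[A]$ ($x\in A\cap B$) with $P_x$ ending in $x$, such that for each $x$ there are $\ell$ $U$–$P_x$ paths in $G[(A\setminus B)\cup\{x\}]$ meeting pairwise at most in their endvertices on $P_x$. A graph has tree-width $\le w$ if it has a tree-decomposition all of whose bags have at most $w+1$ vertices. *)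

theory Defs
  imports Main
begin

definition graph :: "'a set \<Rightarrow> ('a \<Rightarrow> 'a \<Rightarrow> bool) \<Rightarrow> bool" where
  "graph V E \<longleftrightarrow> (\<forall>u v. E u v \<longrightarrow> u \<in> V \<and> v \<in> V \<and> u \<noteq> v \<and> E v u)"

definition is_path :: "'a set \<Rightarrow> ('a \<Rightarrow> 'a \<Rightarrow> bool) \<Rightarrow> 'a list \<Rightarrow> bool" where
  "is_path S E p \<longleftrightarrow> p \<noteq> [] \<and> distinct p \<and> set p \<subseteq> S \<and>
     (\<forall>i. Suc i < length p \<longrightarrow> E (p ! i) (p ! Suc i))"

definition is_tree :: "'t set \<Rightarrow> ('t \<Rightarrow> 't \<Rightarrow> bool) \<Rightarrow> bool" where
  "is_tree T TE \<longleftrightarrow> graph T TE \<and> T \<noteq> {} \<and>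
     (\<forall>u\<in>T. \<forall>v\<in>T. \<exists>!p. is_path T TE p \<and> hd p = u \<and> last p = v)"

definition tree_decomposition ::
  "'a set \<Rightarrow> ('a \<Rightarrow> 'a \<Rightarrow> bool) \<Rightarrow> 't set \<Rightarrow> ('t \<Rightarrow> 't \<Rightarrow> bool) \<Rightarrow> ('t \<Rightarrow> 'a set) \<Rightarrow> bool" where
  "tree_decomposition V E T TE bag \<longleftrightarrow> is_tree T TE \<and>
     (\<forall>t\<in>T. bag t \<subseteq> V) \<and>
     V = (\<Union>t\<in>T. bag t) \<and>
     (\<forall>u v. E u v \<longrightarrow> (\<exists>t\<in>T. u \<in> bag t \<and> v \<in> bag t)) \<and>
     (\<forall>p i. is_path T TE p \<and> i < length p \<longrightarrow> bag (hd p) \<inter> bag (last p) \<subseteq> bag (p ! i))"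

text \<open>Tree-width at most w, witnessed by a tree-decomposition whose tree has nodes of type 't.\<close>
definition treewidth_le :: "'t itself \<Rightarrow> 'a set \<Rightarrow> ('a \<Rightarrow> 'a \<Rightarrow> bool) \<Rightarrow> nat \<Rightarrow> bool" where
  "treewidth_le _ V E w \<longleftrightarrow> (\<exists>(T::'t set) TE bag. tree_decomposition V E T TE bag \<and>
     (\<forall>t\<in>T. finite (bag t) \<and> card (bag t) \<le> w + 1))"

definition separation :: "'a set \<Rightarrow> ('a \<Rightarrow> 'a \<Rightarrow> bool) \<Rightarrow> 'a set \<Rightarrow> 'a set \<Rightarrow> bool" where
  "separation V E A B \<longleftrightarrow> A \<subseteq> V \<and> B \<subseteq> V \<and> A \<union> B = V \<and>
     (\<forall>u v. E u v \<and> u \<in> A - B \<longrightarrow> v \<notin> B - A)"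

definition sep_order :: "'a set \<times> 'a set \<Rightarrow> nat" where
  "sep_order s = card (fst s \<inter> snd s)"

definition is_star :: "'a set \<Rightarrow> ('a \<Rightarrow> 'a \<Rightarrow> bool) \<Rightarrow> ('a set \<times> 'a set) set \<Rightarrow> bool" where
  "is_star V E \<sigma> \<longleftrightarrow>
     (\<forall>(A,B)\<in>\<sigma>. separation V E A B \<and> finite (A \<inter> B)) \<and>
     (V, V) \<notin> \<sigma> \<and>
     (\<forall>(A,B)\<in>\<sigma>. \<forall>(C,D)\<in>\<sigma>. (A,B) \<noteq> (C,D) \<longrightarrow> A \<subseteq> D \<and> C \<subseteq> B)"

text \<open>Interior of a star (the intersection over the empty star is V).\<close>
definition star_int :: "'a set \<Rightarrow> ('a set \<times> 'a set) set \<Rightarrow> 'a set" where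
  "star_int V \<sigma> = V \<inter> (\<Inter>(A,B)\<in>\<sigma>. B)"

definition torso_edges :: "'a set \<Rightarrow> ('a \<Rightarrow> 'a \<Rightarrow> bool) \<Rightarrow> ('a set \<times> 'a set) set \<Rightarrow> 'a \<Rightarrow> 'a \<Rightarrow> bool" where
  "torso_edges V E \<sigma> u v \<longleftrightarrow> u \<in> star_int V \<sigma> \<and> v \<in> star_int V \<sigma> \<and>
     (E u v \<or> (u \<noteq> v \<and> (\<exists>(A,B)\<in>\<sigma>. u \<in> A \<inter> B \<and> v \<in> A \<inter> B)))"

text \<open>Left-l-robustness of a finite-order separation (A,B). A U--X path meets U exactly in its
  first vertex and X exactly in its last vertex.\<close>
definition left_robust :: "('a \<Rightarrow> 'a \<Rightarrow> bool) \<Rightarrow> nat \<Rightarrow> 'a set \<Rightarrow> 'a set \<Rightarrow> bool" where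
  "left_robust E l A B \<longleftrightarrow> (\<exists>U P.
     U \<subseteq> A \<and> finite U \<and> card U = l \<and>
     (\<forall>x\<in>A \<inter> B. is_path A E (P x) \<and> last (P x) = x) \<and>
     (\<forall>x\<in>A \<inter> B. \<forall>y\<in>A \<inter> B. x \<noteq> y \<longrightarrow> set (P x) \<inter> set (P y) = {}) \<and>
     (\<forall>x\<in>A \<inter> B. \<exists>Q. finite Q \<and> card Q = l \<and>
        (\<forall>q\<in>Q. is_path ((A - B) \<union> {x}) E q \<and> set q \<inter> U = {hd q} \<and>
                 set q \<inter> set (P x) = {last q}) \<and>
        (\<forall>q\<in>Q. \<forall>q'\<in>Q. q \<noteq> q' \<longrightarrow> set q \<inter> set q' \<subseteq> {last q, last q'})))"

end

theory Submission
  imports Defs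
begin


lemma path_take: "is_path S E p \<Longrightarrow> 0 < n \<Longrightarrow> is_path S E (take n p)"
  unfolding is_path_def by (auto dest: in_set_takeD)

lemma path_drop: "is_path S E p \<Longrightarrow> n < length p \<Longrightarrow> is_path S E (drop n p)"
  unfolding is_path_def by (auto dest: in_set_dropD)

lemma path_rev: assumes "is_path S E p" "\<And>u v. E u v \<Longrightarrow> E v u"
  shows "is_path S E (rev p)"
  unfolding is_path_def
proof (intro conjI allI impI)
  fix i assume i: "Suc i < length (rev p)"
  have "E (p ! (length p - Suc (Suc i))) (p ! Suc (length p - Suc (Suc i)))"
    using assms(1) i unfolding is_path_def by auto
  moreover have "Suc (length p - Suc (Suc i)) = length p - Suc i" using i by auto
  ultimately show "E (rev p ! i) (rev p ! Suc i)" using i assms(2) by (auto simp: rev_nth)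
qed (use assms in \<open>auto simp: is_path_def\<close>)

lemma path_Cons: "is_path S E p \<Longrightarrow> x \<in> S \<Longrightarrow> x \<notin> set p \<Longrightarrow> E x (hd p) \<Longrightarrow> is_path S E (x # p)"
  unfolding is_path_def by (auto simp: nth_Cons hd_conv_nth split: nat.splits)

lemma path_mono: "is_path S E p \<Longrightarrow> set p \<subseteq> S' \<Longrightarrow> is_path S' E p"
  unfolding is_path_def by auto

lemma path_two: "x \<in> S \<Longrightarrow> y \<in> S \<Longrightarrow> x \<noteq> y \<Longrightarrow> E x y \<Longrightarrow> is_path S E [x, y]"
  unfolding is_path_def by (auto simp: less_Suc_eq)

lemma path_one: "x \<in> S \<Longrightarrow> is_path S E [x]"
  unfolding is_path_def by auto

definition tp :: "'t set \<Rightarrow> ('t \<Rightarrow> 't \<Rightarrow> bool) \<Rightarrow> 't \<Rightarrow> 't \<Rightarrow> 't list" where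
  "tp T TE s t = (THE p. is_path T TE p \<and> hd p = s \<and> last p = t)"

lemma tp_path: assumes "is_tree T TE" "s \<in> T" "t \<in> T"
  shows "is_path T TE (tp T TE s t) \<and> hd (tp T TE s t) = s \<and> last (tp T TE s t) = t"
proof -
  have "\<exists>!p. is_path T TE p \<and> hd p = s \<and> last p = t" using assms unfolding is_tree_def by blast
  then show ?thesis unfolding tp_def by (rule theI')
qed

lemma tp_unique: assumes "is_tree T TE" "is_path T TE p" "hd p = s" "last p = t"
  shows "tp T TE s t = p"
proof -
  have st: "s \<in> T" "t \<in> T" using assms(2-4) unfolding is_path_def by auto
  have ex: "\<exists>!p. is_path T TE p \<and> hd p = s \<and> last p = t" using assms(1) st unfolding is_tree_def by blast
  show ?thesis unfolding tp_def by (rule the1_equality[OF ex]) (use assms(2-4) in simp)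
qed

lemma tree_sym: "is_tree T TE \<Longrightarrow> TE u v \<Longrightarrow> TE v u"
  unfolding is_tree_def graph_def by blast

lemma tree_edge: "is_tree T TE \<Longrightarrow> TE u v \<Longrightarrow> u \<in> T \<and> v \<in> T \<and> u \<noteq> v"
  unfolding is_tree_def graph_def by blast

lemma path_edge: "is_path S E p \<Longrightarrow> Suc i < length p \<Longrightarrow> E (p!i) (p!Suc i)"
  unfolding is_path_def by auto

lemma path_nth_in: "is_path S E p \<Longrightarrow> i < length p \<Longrightarrow> p!i \<in> S"
  unfolding is_path_def by auto

lemma hd_take': "0 < n \<Longrightarrow> p \<noteq> [] \<Longrightarrow> hd (take n p) = hd p"
  by (cases p; cases n) auto

lemma last_take': "k < length p \<Longrightarrow> last (take (Suc k) p) = p ! k"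
  by (simp add: take_Suc_conv_app_nth)

lemma hd_drop': "k < length p \<Longrightarrow> hd (drop k p) = p ! k"
  by (simp add: hd_drop_conv_nth)

lemma last_drop': "k < length p \<Longrightarrow> last (drop k p) = last p"
  by simp

definition side :: "'t set \<Rightarrow> ('t \<Rightarrow> 't \<Rightarrow> bool) \<Rightarrow> 't \<Rightarrow> 't \<Rightarrow> 't \<Rightarrow> bool" where
  "side T TE a c t \<longleftrightarrow> c \<notin> set (tp T TE t a)"

lemma tp_sub: assumes "is_tree T TE" "t \<in> T" "a \<in> T" "x \<in> set (tp T TE t a)"
  shows "set (tp T TE x a) \<subseteq> set (tp T TE t a)"
proof -
  let ?P = "tp T TE t a"
  have P: "is_path T TE ?P" "hd ?P = t" "last ?P = a" using tp_path assms by metis+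
  obtain k where k: "k < length ?P" "?P ! k = x" using assms(4) by (auto simp: in_set_conv_nth)
  have "tp T TE x a = drop k ?P"
    using tp_unique[OF assms(1) path_drop[OF P(1) k(1)]] k P by (simp add: hd_drop')
  then show ?thesis by (simp add: set_drop_subset)
qed

lemma side_edge:
  assumes tree: "is_tree T TE" and ac: "TE a c" and tt: "TE t t'"
    and n1: "\<not> (t = a \<and> t' = c)" and n2: "\<not> (t = c \<and> t' = a)"
    and s: "side T TE a c t"
  shows "side T TE a c t'"
proof -
  have inT: "a \<in> T" "c \<in> T" "t \<in> T" "t' \<in> T" "a \<noteq> c" "t \<noteq> t'"
    using tree_edge[OF tree ac] tree_edge[OF tree tt] by auto
  let ?P = "tp T TE t a"
  have P: "is_path T TE ?P" "hd ?P = t" "last ?P = a" using tp_path tree inT by metis+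
  have cP: "c \<notin> set ?P" using s unfolding side_def .
  show ?thesis
  proof (cases "t' \<in> set ?P")
    case True
    then show ?thesis using tp_sub[OF tree inT(3) inT(1) True] cP unfolding side_def by blast
  next
    case False
    have pp: "is_path T TE (t' # ?P)"
      using path_Cons[OF P(1) inT(4) False] tree_sym[OF tree tt] P(2) by simp
    have eq: "tp T TE t' a = t' # ?P"
    proof -
      have "?P \<noteq> []" using P(1) unfolding is_path_def by simp
      then have "last (t' # ?P) = a" using P(3) by simp
      then show ?thesis using tp_unique[OF tree pp] by simp
    qed
    show ?thesis
    proof (rule ccontr)
      assume "\<not> side T TE a c t'"
      then have "t' = c" using eq cP unfolding side_def by auto
      then have ta: "t \<noteq> a" using n1 by auto
      have "is_path T TE [c, a]" using path_two inT tree_sym[OF tree ac] by metis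
      then have "tp T TE c a = [c, a]" using tp_unique[OF tree] by fastforce
      then have "?P = [a]" using eq \<open>t' = c\<close> by simp
      then show False using P(2) ta by simp
    qed
  qed
qed

lemma side_path:
  assumes tree: "is_tree T TE" and ac: "TE a c" and p: "is_path T TE p"
    and s: "side T TE a c (hd p)" and ns: "\<not> side T TE a c (last p)"
  shows "a \<in> set p \<and> c \<in> set p"
proof (rule ccontr)
  assume H: "\<not> (a \<in> set p \<and> c \<in> set p)"
  have "\<forall>j < length p. side T TE a c (p ! j)"
  proof (intro allI impI)
    fix j assume "j < length p"
    then show "side T TE a c (p ! j)"
    proof (induction j)
      case 0 then show ?case using s p by (simp add: hd_conv_nth is_path_def)
    next
      case (Suc j)
      have e: "TE (p!j) (p!Suc j)" using path_edge[OF p Suc.prems] .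
      have "p!j \<in> set p" "p!Suc j \<in> set p" using Suc.prems by auto
      have "\<not> (p!j = a \<and> p!Suc j = c)" "\<not> (p!j = c \<and> p!Suc j = a)"
        using H \<open>p!j \<in> set p\<close> \<open>p!Suc j \<in> set p\<close> by auto
      then show ?case using side_edge[OF tree ac e] Suc by auto
    qed
  qed
  then show False using ns p by (simp add: last_conv_nth is_path_def)
qed

lemma cut_side:
  assumes tree: "is_tree T TE" and p: "is_path T TE p" and i: "Suc i < length p"
  shows "TE (p!i) (p!Suc i) \<and> side T TE (p!i) (p!Suc i) (hd p) \<and> \<not> side T TE (p!i) (p!Suc i) (last p)"
proof -
  have e: "TE (p!i) (p!Suc i)" using path_edge[OF p i] .
  have d: "distinct p" "p \<noteq> []" using p unfolding is_path_def by auto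
  have p1: "is_path T TE (take (Suc i) p)" using path_take[OF p] by simp
  have "tp T TE (hd p) (p!i) = take (Suc i) p"
    using tp_unique[OF tree p1] i d by (simp add: hd_take' last_take')
  moreover have "p!Suc i \<notin> set (take (Suc i) p)"
  proof
    assume "p!Suc i \<in> set (take (Suc i) p)"
    moreover have "p!Suc i \<in> set (drop (Suc i) p)" using Cons_nth_drop_Suc[OF i] by (metis list.set_intros(1))
    ultimately show False using set_take_disj_set_drop_if_distinct[OF d(1), of "Suc i" "Suc i"] by blast
  qed
  ultimately have s1: "side T TE (p!i) (p!Suc i) (hd p)" unfolding side_def by simp
  have p2: "is_path T TE (rev (drop i p))"
    using path_rev[OF path_drop[OF p] tree_sym[OF tree]] i by simp
  have "tp T TE (last p) (p!i) = rev (drop i p)"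
    using tp_unique[OF tree p2] i by (simp add: hd_rev last_rev hd_drop')
  moreover have "p!Suc i \<in> set (drop i p)"
  proof -
    have "drop i p = p!i # drop (Suc i) p" using Cons_nth_drop_Suc[of i p] i by simp
    then show ?thesis using Cons_nth_drop_Suc[OF i] by (metis list.set_intros(1) list.set_intros(2))
  qed
  ultimately have s2: "\<not> side T TE (p!i) (p!Suc i) (last p)" unfolding side_def by simp
  show ?thesis using e s1 s2 by simp
qed



lemma td_tree: "tree_decomposition V E T TE bag \<Longrightarrow> is_tree T TE"
  unfolding tree_decomposition_def by blast
lemma td_conv: "tree_decomposition V E T TE bag \<Longrightarrow> is_path T TE p \<Longrightarrow> x \<in> bag (hd p) \<Longrightarrow>
   x \<in> bag (last p) \<Longrightarrow> i < length p \<Longrightarrow> x \<in> bag (p!i)"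
  unfolding tree_decomposition_def by blast
lemma td_edge: "tree_decomposition V E T TE bag \<Longrightarrow> E u v \<Longrightarrow> \<exists>t\<in>T. u \<in> bag t \<and> v \<in> bag t"
  unfolding tree_decomposition_def by blast
lemma td_cover: "tree_decomposition V E T TE bag \<Longrightarrow> x \<in> V \<Longrightarrow> \<exists>t\<in>T. x \<in> bag t"
  unfolding tree_decomposition_def by blast

definition inrel :: "('a \<Rightarrow> 'a \<Rightarrow> bool) \<Rightarrow> 'a set \<Rightarrow> ('a \<times> 'a) set" where
  "inrel E W = {(u,v). E u v \<and> u \<in> W \<and> v \<in> W}"

lemma inrel_sym: "(\<And>u v. E u v \<Longrightarrow> E v u) \<Longrightarrow> (x,y) \<in> (inrel E W)\<^sup>* \<Longrightarrow> (y,x) \<in> (inrel E W)\<^sup>*"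
proof -
  assume s: "\<And>u v. E u v \<Longrightarrow> E v u" and xy: "(x,y) \<in> (inrel E W)\<^sup>*"
  have "sym (inrel E W)" unfolding sym_def inrel_def using s by blast
  then have "sym ((inrel E W)\<^sup>*)" by (rule sym_rtrancl)
  then show ?thesis using xy by (meson symD)
qed

lemma inrel_mono: "W \<subseteq> W' \<Longrightarrow> (x,y) \<in> (inrel E W)\<^sup>* \<Longrightarrow> (x,y) \<in> (inrel E W')\<^sup>*"
proof -
  assume "W \<subseteq> W'" "(x,y) \<in> (inrel E W)\<^sup>*"
  moreover have "inrel E W \<subseteq> inrel E W'" using \<open>W \<subseteq> W'\<close> unfolding inrel_def by auto
  ultimately show ?thesis using rtrancl_mono by blast
qed

lemma path_conn0: assumes p: "is_path X E p" and W: "set p \<subseteq> W" and i: "i < length p"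
  shows "(p!0, p!i) \<in> (inrel E W)\<^sup>*"
  using i
proof (induction i)
  case 0 then show ?case by simp
next
  case (Suc i)
  have "E (p!i) (p!Suc i)" using path_edge[OF p Suc.prems] .
  moreover have "p!i \<in> set p" "p!Suc i \<in> set p" using Suc.prems by simp_all
  ultimately have st: "(p!i, p!Suc i) \<in> inrel E W" using W unfolding inrel_def by auto
  have "(p!0, p!i) \<in> (inrel E W)\<^sup>*" using Suc.IH Suc.prems by simp
  then show ?case using st by (rule rtrancl.rtrancl_into_rtrancl)
qed

lemma path_conn: assumes p: "is_path X E p" and W: "set p \<subseteq> W" and s: "\<And>u v. E u v \<Longrightarrow> E v u"
  and x: "x \<in> set p" and y: "y \<in> set p"
  shows "(x, y) \<in> (inrel E W)\<^sup>*"
proof -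
  obtain i where i: "i < length p" "p!i = x" using x by (auto simp: in_set_conv_nth)
  obtain j where j: "j < length p" "p!j = y" using y by (auto simp: in_set_conv_nth)
  have 1: "(x, p!0) \<in> (inrel E W)\<^sup>*" using inrel_sym[OF s path_conn0[OF p W i(1)]] i by simp
  have 2: "(p!0, y) \<in> (inrel E W)\<^sup>*" using path_conn0[OF p W j(1)] j by simp
  show ?thesis using 1 2 by (rule rtrancl_trans)
qed

lemma one_side:
  assumes td: "tree_decomposition V E T TE bag" and ac: "TE a c"
    and x: "x \<notin> bag a \<inter> bag c" and t: "t \<in> T" "x \<in> bag t" and t': "t' \<in> T" "x \<in> bag t'"
    and s: "side T TE a c t"
  shows "side T TE a c t'"
proof (rule ccontr)
  assume ns: "\<not> side T TE a c t'"
  have tree: "is_tree T TE" using td by (rule td_tree)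
  let ?p = "tp T TE t t'"
  have p: "is_path T TE ?p" "hd ?p = t" "last ?p = t'" using tp_path[OF tree t(1) t'(1)] by auto
  have "a \<in> set ?p \<and> c \<in> set ?p" using side_path[OF tree ac p(1)] s ns p by simp
  then obtain i j where "i < length ?p" "?p!i = a" "j < length ?p" "?p!j = c" by (auto simp: in_set_conv_nth)
  then have "x \<in> bag a" "x \<in> bag c" using td_conv[OF td p(1)] p t t' by metis+
  then show False using x by blast
qed

lemma sep_lemma:
  assumes td: "tree_decomposition V E T TE bag" and ac: "TE a c"
    and xy: "(x,y) \<in> (inrel E (- (bag a \<inter> bag c)))\<^sup>*" and x: "x \<notin> bag a \<inter> bag c"
    and t1: "t1 \<in> T" "x \<in> bag t1" "side T TE a c t1"
    and t2: "t2 \<in> T" "y \<in> bag t2"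
  shows "side T TE a c t2"
proof -
  have "y \<notin> bag a \<inter> bag c \<and> (\<exists>t\<in>T. y \<in> bag t \<and> side T TE a c t)"
    using xy
  proof (induction rule: rtrancl_induct)
    case base then show ?case using x t1 by blast
  next
    case (step y z)
    then obtain t where t: "t \<in> T" "y \<in> bag t" "side T TE a c t" by blast
    have yz: "E y z" "z \<notin> bag a \<inter> bag c" using step(2) unfolding inrel_def by auto
    obtain t0 where t0: "t0 \<in> T" "y \<in> bag t0" "z \<in> bag t0" using td_edge[OF td yz(1)] by blast
    have "side T TE a c t0" using one_side[OF td ac _ t(1,2) t0(1,2) t(3)] step(3) by blast
    then show ?case using yz t0 by blast
  qed
  then show ?thesis using one_side[OF td ac] t2 by blast
qed

lemma convex_conn:
  assumes td: "tree_decomposition V E T TE bag"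
    and conn: "\<forall>x\<in>W. \<forall>y\<in>W. (x,y) \<in> (inrel E W)\<^sup>*"
    and p: "is_path T TE p" and h: "bag (hd p) \<inter> W \<noteq> {}" and l: "bag (last p) \<inter> W \<noteq> {}"
    and k: "k < length p"
  shows "bag (p!k) \<inter> W \<noteq> {}"
proof (rule ccontr)
  assume H: "\<not> bag (p!k) \<inter> W \<noteq> {}"
  have tree: "is_tree T TE" using td by (rule td_tree)
  have ne: "p \<noteq> []" using p unfolding is_path_def by simp
  have k0: "k \<noteq> 0" using H h ne by (auto simp: hd_conv_nth)
  have k1: "k \<noteq> length p - 1" using H l ne by (auto simp: last_conv_nth)
  define i where "i = k - 1"
  have ik: "Suc i = k" using k0 unfolding i_def by simp
  have i: "Suc i < length p" using ik k by simp
  note cs = cut_side[OF tree p i]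
  let ?a = "p!i" and ?c = "p!Suc i"
  obtain x where x: "x \<in> bag (hd p)" "x \<in> W" using h by blast
  obtain y where y: "y \<in> bag (last p)" "y \<in> W" using l by blast
  have WS: "W \<subseteq> - (bag ?a \<inter> bag ?c)" using H ik by blast
  have xy: "(x,y) \<in> (inrel E (- (bag ?a \<inter> bag ?c)))\<^sup>*"
    using inrel_mono[OF WS] conn x y by blast
  have hT: "hd p \<in> T" "last p \<in> T" using p ne unfolding is_path_def by auto
  have "side T TE ?a ?c (last p)"
    using sep_lemma[OF td _ xy _ hT(1) x(1) _ hT(2) y(1)] cs WS x(2) by blast
  then show False using cs by blast
qed



lemma distinct_hd_last: "distinct xs \<Longrightarrow> xs \<noteq> [] \<Longrightarrow> hd xs = last xs \<Longrightarrow> xs = [hd xs]"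
proof (cases xs)
  case (Cons y ys)
  assume "distinct xs" "hd xs = last xs"
  then show ?thesis using Cons by (cases ys) (auto split: if_splits)
qed simp

locale qfam =
  fixes E :: "'a \<Rightarrow> 'a \<Rightarrow> bool" and V U :: "'a set" and P :: "'a list" and Q :: "'a list set"
  assumes Qp: "\<forall>q\<in>Q. is_path V E q \<and> set q \<inter> U = {hd q} \<and> set q \<inter> set P = {last q}"
    and Qd: "\<forall>q\<in>Q. \<forall>q'\<in>Q. q \<noteq> q' \<longrightarrow> set q \<inter> set q' \<subseteq> {last q, last q'}"
begin

lemma q_path: assumes "q \<in> Q" shows "is_path V E q"
  using Qp assms by blast

lemma q_last: assumes "q \<in> Q" shows "last q \<in> set P"
proof -
  have eq: "set q \<inter> set P = {last q}" using Qp assms by blast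
  have "last q \<in> set q \<inter> set P" by (subst eq) simp
  then show ?thesis by simp
qed

lemma q_hd: assumes "q \<in> Q" shows "hd q \<in> U"
proof -
  have eq: "set q \<inter> U = {hd q}" using Qp assms by blast
  have "hd q \<in> set q \<inter> U" by (subst eq) simp
  then show ?thesis by simp
qed

lemma hd_inj: "inj_on hd Q"
proof (rule inj_onI, rule ccontr)
  fix q q' assume q: "q \<in> Q" "q' \<in> Q" "hd q = hd q'" "q \<noteq> q'"
  have pq: "is_path V E q" "is_path V E q'" using Qp q by auto
  have ne: "q \<noteq> []" "q' \<noteq> []" using pq unfolding is_path_def by auto
  have "hd q \<in> set q \<inter> set q'" using ne q(3) by (metis IntI list.set_sel(1))
  then have "hd q \<in> {last q, last q'}" using Qd q by blast
  then have "hd q = last q \<or> hd q = last q'" by simp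
  then show False
  proof
    assume h: "hd q = last q"
    then have qq: "q = [hd q]" using distinct_hd_last pq(1) ne unfolding is_path_def by blast
    have "hd q \<in> set P" using Qp q(1) h ne by (metis Int_iff insertI1 last_in_set)
    then have "hd q' \<in> set q' \<inter> set P" using q(3) hd_in_set[OF ne(2)] by auto
    then have "hd q' = last q'" using Qp q(2) by blast
    then have "q' = [hd q']" using distinct_hd_last pq(2) ne unfolding is_path_def by blast
    then show False using qq q by simp
  next
    assume h: "hd q = last q'"
    then have qq: "q' = [hd q']" using distinct_hd_last pq(2) ne q(3) unfolding is_path_def by metis
    have "hd q' \<in> set P" using Qp q(2) h q(3) ne by (metis Int_iff insertI1 last_in_set)
    then have "hd q \<in> set q \<inter> set P" using q(3) hd_in_set[OF ne(1)] by auto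
    then have "hd q = last q" using Qp q(1) by blast
    then have "q = [hd q]" using distinct_hd_last pq(1) ne unfolding is_path_def by blast
    then show False using qq q by simp
  qed
qed

lemma good:
  assumes fQ: "finite Q" and S: "finite S" "S \<inter> set P = {}"
  shows "card (hd ` {q\<in>Q. set q \<inter> S = {}}) + card S \<ge> card Q"
    and "hd ` {q\<in>Q. set q \<inter> S = {}} \<subseteq> U"
proof -
  let ?B = "{q\<in>Q. set q \<inter> S \<noteq> {}}" and ?G = "{q\<in>Q. set q \<inter> S = {}}"
  define f where "f q = (SOME s. s \<in> set q \<inter> S)" for q
  have fB: "f q \<in> set q \<inter> S" if "q \<in> ?B" for q
  proof -
    have "set q \<inter> S \<noteq> {}" using that by simp
    then obtain s0 where "s0 \<in> set q \<inter> S" by blast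
    then show ?thesis unfolding f_def by (rule someI)
  qed
  have "inj_on f ?B"
  proof (rule inj_onI, rule ccontr)
    fix q q' assume q: "q \<in> ?B" "q' \<in> ?B" "f q = f q'" "q \<noteq> q'"
    have a: "f q \<in> set q \<inter> S" by (rule fB[OF q(1)])
    have b: "f q' \<in> set q' \<inter> S" by (rule fB[OF q(2)])
    have "f q \<in> set q \<inter> set q'" using a b q(3) by simp
    moreover have "set q \<inter> set q' \<subseteq> {last q, last q'}" using Qd q by simp
    ultimately have "f q = last q \<or> f q = last q'" by blast
    moreover have "last q \<in> set P" "last q' \<in> set P" using q_last q by simp_all
    ultimately have "f q \<in> set P" by (elim disjE) simp_all
    then have "f q \<in> S \<inter> set P" using a by simp
    then show False using S(2) by simp
  qed
  moreover have "f ` ?B \<subseteq> S" using fB by blast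
  ultimately have cB: "card ?B \<le> card S" using S(1) by (rule card_inj_on_le)
  have "inj_on hd ?G" using hd_inj by (rule inj_on_subset) blast
  then have "card ?G = card (hd ` ?G)" by (simp add: card_image)
  moreover have "card Q = card ?G + card ?B"
  proof -
    have e: "Q = ?G \<union> ?B" by blast
    have "card (?G \<union> ?B) = card ?G + card ?B" by (rule card_Un_disjoint) (use fQ in auto)
    then show ?thesis using e by simp
  qed
  ultimately show "card (hd ` ?G) + card S \<ge> card Q" using cB by linarith
  show "hd ` ?G \<subseteq> U"
  proof
    fix h assume "h \<in> hd ` ?G"
    then obtain q where "q \<in> Q" "h = hd q" by blast
    then show "h \<in> U" using q_hd by blast
  qed
qed

end

lemma main_link:
  assumes G: "graph V E" and td: "tree_decomposition V E T TE bag"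
    and fin: "\<forall>t\<in>T. finite (bag t) \<and> card (bag t) \<le> w + 1"
    and l: "2 * w + 2 < l"
    and U: "finite U" "card U = l"
    and Pu: "is_path V E Pu" and Pv: "is_path V E Pv" and disj: "set Pu \<inter> set Pv = {}"
    and Qu: "finite Qu" "card Qu = l" "qfam E V U Pu Qu"
    and Qv: "finite Qv" "card Qv = l" "qfam E V U Pv Qv"
  shows "\<exists>t\<in>T. bag t \<inter> set Pu \<noteq> {} \<and> bag t \<inter> set Pv \<noteq> {}"
proof (rule ccontr)
  assume H0: "\<not> ?thesis"
  have H: "\<And>t. t \<in> T \<Longrightarrow> bag t \<inter> set Pu \<noteq> {} \<Longrightarrow> bag t \<inter> set Pv = {}" using H0 by blast
  have sym: "\<And>u v. E u v \<Longrightarrow> E v u" using G unfolding graph_def by blast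
  have tree: "is_tree T TE" using td by (rule td_tree)
  have neu: "Pu \<noteq> []" "hd Pu \<in> V" using Pu unfolding is_path_def by auto
  have nev: "Pv \<noteq> []" "hd Pv \<in> V" using Pv unfolding is_path_def by auto
  obtain t1 where t1: "t1 \<in> T" "hd Pu \<in> bag t1" using td_cover[OF td neu(2)] by blast
  obtain t2 where t2: "t2 \<in> T" "hd Pv \<in> bag t2" using td_cover[OF td nev(2)] by blast
  let ?p = "tp T TE t1 t2"
  have p: "is_path T TE ?p" "hd ?p = t1" "last ?p = t2" using tp_path[OF tree t1(1) t2(1)] by auto
  have pne: "?p \<noteq> []" using p unfolding is_path_def by simp
  define I where "I = {i. i < length ?p \<and> bag (?p!i) \<inter> set Pu \<noteq> {}}"
  have fI: "finite I" unfolding I_def by simp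
  have "0 \<in> I" unfolding I_def using pne p(2) t1 neu by (auto simp: hd_conv_nth)
  define i where "i = Max I"
  have "I \<noteq> {}" using \<open>0 \<in> I\<close> by blast
  then have iI: "i \<in> I" using Max_in[OF fI] unfolding i_def by simp
  have imax: "\<And>j. j \<in> I \<Longrightarrow> j \<le> i" using fI unfolding i_def by simp
  have "hd Pv \<in> set Pv" using nev(1) by (rule hd_in_set)
  then have "bag t2 \<inter> set Pv \<noteq> {}" using t2(2) by blast
  then have t2u: "bag t2 \<inter> set Pu = {}" using H[OF t2(1)] by blast
  have "length ?p - 1 \<notin> I" using t2u p(3) pne by (simp add: I_def last_conv_nth)
  moreover have "i < length ?p" using iI unfolding I_def by simp
  ultimately have "i \<noteq> length ?p - 1" using iI by auto
  then have i1: "Suc i < length ?p" using \<open>i < length ?p\<close> by linarith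
  note cs = cut_side[OF tree p(1) i1]
  let ?a = "?p!i" and ?c = "?p!Suc i"
  have aT: "?a \<in> T" "?c \<in> T" using p(1) i1 by (auto intro: path_nth_in)
  have au: "bag ?a \<inter> set Pu \<noteq> {}" using iI unfolding I_def by simp
  have cu: "bag ?c \<inter> set Pu = {}" using imax[of "Suc i"] i1 unfolding I_def by auto
  have av: "bag ?a \<inter> set Pv = {}" using H aT au by blast
  define S where "S = bag ?a \<inter> bag ?c"
  have Su: "S \<inter> set Pu = {}" and Sv: "S \<inter> set Pv = {}" using cu av unfolding S_def by auto
  have fS: "finite S" and cS: "card S \<le> w + 1"
    using fin aT unfolding S_def by (auto intro: le_trans[OF card_mono])
  let ?Hu = "hd ` {q\<in>Qu. set q \<inter> S = {}}" and ?Hv = "hd ` {q\<in>Qv. set q \<inter> S = {}}"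
  have gu: "card ?Hu + card S \<ge> l" "?Hu \<subseteq> U" using qfam.good[OF Qu(3) Qu(1) fS Su] Qu(2) by auto
  have gv: "card ?Hv + card S \<ge> l" "?Hv \<subseteq> U" using qfam.good[OF Qv(3) Qv(1) fS Sv] Qv(2) by auto
  have "?Hu \<union> ?Hv \<subseteq> U" using gu(2) gv(2) by (rule Un_least)
  then have c1: "card (?Hu \<union> ?Hv) \<le> l" using card_mono[OF U(1)] U(2) by simp
  have "finite ?Hu" "finite ?Hv" using gu(2) gv(2) U(1) finite_subset by auto
  then have c2: "card (?Hu \<union> ?Hv) + card (?Hu \<inter> ?Hv) = card ?Hu + card ?Hv"
    using card_Un_Int[of ?Hu ?Hv] by simp
  from c1 c2 have "card (?Hu \<inter> ?Hv) > 0" using gu(1) gv(1) cS l by linarith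
  then have "?Hu \<inter> ?Hv \<noteq> {}" by (simp add: card_gt_0_iff)
  then obtain h where h: "h \<in> ?Hu" "h \<in> ?Hv" by blast
  from h(1) obtain q where q: "q \<in> Qu" "set q \<inter> S = {}" "hd q = h" by (auto simp: image_iff)
  from h(2) obtain q' where q': "q' \<in> Qv" "set q' \<inter> S = {}" "hd q' = h" by (auto simp: image_iff)
  have qp: "is_path V E q" "last q \<in> set Pu" using qfam.q_path[OF Qu(3) q(1)] qfam.q_last[OF Qu(3) q(1)] by auto
  have qp': "is_path V E q'" "last q' \<in> set Pv" using qfam.q_path[OF Qv(3) q'(1)] qfam.q_last[OF Qv(3) q'(1)] by auto
  have qne: "q \<noteq> []" "q' \<noteq> []" using qp qp' unfolding is_path_def by auto
  obtain z1 where z1: "z1 \<in> bag ?a" "z1 \<in> set Pu" using au by blast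
  let ?R = "inrel E (- S)"
  have r1: "(z1, last q) \<in> ?R\<^sup>*" using path_conn[OF Pu _ sym z1(2) qp(2)] Su by blast
  have sq: "set q \<subseteq> - S" "set q' \<subseteq> - S" "set Pv \<subseteq> - S" using q(2) q'(2) Sv by blast+
  have r2: "(last q, hd q) \<in> ?R\<^sup>*" using path_conn[OF qp(1) sq(1) sym last_in_set[OF qne(1)] hd_in_set[OF qne(1)]] .
  have r3: "(hd q, last q') \<in> ?R\<^sup>*" using path_conn[OF qp'(1) sq(2) sym hd_in_set[OF qne(2)] last_in_set[OF qne(2)]] q(3) q'(3) by simp
  have r4: "(last q', hd Pv) \<in> ?R\<^sup>*" using path_conn[OF Pv sq(3) sym qp'(2) hd_in_set[OF nev(1)]] .
  have zz: "(z1, hd Pv) \<in> (inrel E (- (bag ?a \<inter> bag ?c)))\<^sup>*"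
    using rtrancl_trans[OF rtrancl_trans[OF rtrancl_trans[OF r1 r2] r3] r4] q(3) q'(3) unfolding S_def by simp
  have zS: "z1 \<notin> bag ?a \<inter> bag ?c" using z1 Su unfolding S_def by blast
  have sa: "side T TE ?a ?c ?a"
  proof -
    have "tp T TE ?a ?a = [?a]" using tp_unique[OF tree path_one[OF aT(1)]] by simp
    moreover have "?a \<noteq> ?c" using tree_edge[OF tree] cs by blast
    ultimately show ?thesis unfolding side_def by simp
  qed
  have ac: "TE ?a ?c" using cs by blast
  have "side T TE ?a ?c t2"
    using sep_lemma[OF td ac zz zS aT(1) z1(1) sa t2(1) t2(2)] .
  then show False using cs p(3) by simp
qed



lemma star_facts:
  assumes "is_star V E \<sigma>" "s \<in> \<sigma>"
  shows "fst s \<subseteq> V" "snd s \<subseteq> V"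
proof -
  obtain A B where s: "s = (A,B)" by (cases s)
  then have "separation V E A B" using assms unfolding is_star_def by fastforce
  then show "fst s \<subseteq> V" "snd s \<subseteq> V" using s unfolding separation_def by auto
qed

lemma star_cross:
  assumes "is_star V E \<sigma>" "s \<in> \<sigma>" "s' \<in> \<sigma>" "s \<noteq> s'"
  shows "fst s \<subseteq> snd s'"
proof -
  obtain A B C D where "s = (A,B)" "s' = (C,D)" by (cases s, cases s')
  then show ?thesis using assms unfolding is_star_def by fastforce
qed

lemma int_in: assumes "v \<in> star_int V \<sigma>" "s \<in> \<sigma>" shows "v \<in> snd s \<and> v \<in> V"
proof -
  obtain A B where s: "s = (A,B)" by (cases s)
  then show ?thesis using assms unfolding star_int_def by fastforce
qed

lemma torso_cases:
  assumes "torso_edges V E \<sigma> u v"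
  shows "u \<in> star_int V \<sigma> \<and> v \<in> star_int V \<sigma> \<and> (E u v \<or> (u \<noteq> v \<and> (\<exists>s\<in>\<sigma>. u \<in> fst s \<inter> snd s \<and> v \<in> fst s \<inter> snd s)))"
proof -
  have "u \<in> star_int V \<sigma> \<and> v \<in> star_int V \<sigma> \<and> (E u v \<or> (u \<noteq> v \<and> (\<exists>(A,B)\<in>\<sigma>. u \<in> A \<inter> B \<and> v \<in> A \<inter> B)))"
    using assms unfolding torso_edges_def by blast
  moreover have "\<exists>s\<in>\<sigma>. u \<in> fst s \<inter> snd s \<and> v \<in> fst s \<inter> snd s" if ex: "\<exists>(A,B)\<in>\<sigma>. u \<in> A \<inter> B \<and> v \<in> A \<inter> B"
  proof -
    obtain A B where "(A,B) \<in> \<sigma>" "u \<in> A \<inter> B" "v \<in> A \<inter> B" using ex by blast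
    then show ?thesis by (intro bexI[of _ "(A,B)"]) auto
  qed
  ultimately show ?thesis by blast
qed

definition RBQ :: "('a \<Rightarrow> 'a \<Rightarrow> bool) \<Rightarrow> nat \<Rightarrow> 'a set \<Rightarrow> 'a set \<Rightarrow> 'a set \<Rightarrow> 'a list \<Rightarrow> 'a \<Rightarrow> 'a list set \<Rightarrow> bool" where
  "RBQ E l A B U P x Q \<longleftrightarrow> finite Q \<and> card Q = l \<and>
        (\<forall>q\<in>Q. is_path ((A - B) \<union> {x}) E q \<and> set q \<inter> U = {hd q} \<and>
                 set q \<inter> set P = {last q}) \<and>
        (\<forall>q\<in>Q. \<forall>q'\<in>Q. q \<noteq> q' \<longrightarrow> set q \<inter> set q' \<subseteq> {last q, last q'})"

definition RB :: "('a \<Rightarrow> 'a \<Rightarrow> bool) \<Rightarrow> nat \<Rightarrow> 'a set \<Rightarrow> 'a set \<Rightarrow> 'a set \<Rightarrow> ('a \<Rightarrow> 'a list) \<Rightarrow> bool" where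
  "RB E l A B U P \<longleftrightarrow>
     U \<subseteq> A \<and> finite U \<and> card U = l \<and>
     (\<forall>x\<in>A \<inter> B. is_path A E (P x) \<and> last (P x) = x) \<and>
     (\<forall>x\<in>A \<inter> B. \<forall>y\<in>A \<inter> B. x \<noteq> y \<longrightarrow> set (P x) \<inter> set (P y) = {}) \<and>
     (\<forall>x\<in>A \<inter> B. \<exists>Q. RBQ E l A B U (P x) x Q)"

lemma robust_RB: "left_robust E l A B \<Longrightarrow> \<exists>U P. RB E l A B U P"
  unfolding left_robust_def RB_def RBQ_def by blast

lemma RBQ_qfam: assumes "RBQ E l A B U P x Q" "A \<subseteq> V" "x \<in> A"
  shows "qfam E V U P Q" "finite Q" "card Q = l"
proof -
  have sub: "(A - B) \<union> {x} \<subseteq> V" using assms(2,3) by blast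
  show "qfam E V U P Q" unfolding qfam_def
  proof (intro conjI ballI impI)
    fix q assume q: "q \<in> Q"
    have "is_path ((A - B) \<union> {x}) E q" using assms(1) q unfolding RBQ_def by blast
    then show "is_path V E q" using path_mono sub unfolding is_path_def by blast
    show "set q \<inter> U = {hd q}" using assms(1) q unfolding RBQ_def by blast
    show "set q \<inter> set P = {last q}" using assms(1) q unfolding RBQ_def by blast
  next
    fix q q' assume "q \<in> Q" "q' \<in> Q" "q \<noteq> q'"
    then show "set q \<inter> set q' \<subseteq> {last q, last q'}" using assms(1) unfolding RBQ_def by blast
  qed
  show "finite Q" "card Q = l" using assms(1) unfolding RBQ_def by blast+
qed

lemma torso_td:
  assumes G: "graph V E" and td: "tree_decomposition V E T TE bag"
    and fin: "\<forall>t\<in>T. finite (bag t) \<and> card (bag t) \<le> w + 1"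
    and star: "is_star V E \<sigma>"
    and rob: "\<forall>(A,B)\<in>\<sigma>. left_robust E l A B" and l: "2 * w + 2 < l"
  shows "\<exists>bag'. tree_decomposition (star_int V \<sigma>) (torso_edges V E \<sigma>) T TE bag' \<and>
           (\<forall>t\<in>T. finite (bag' t) \<and> card (bag' t) \<le> w + 1)"
proof -
  let ?I = "star_int V \<sigma>"
  have sym: "\<And>u v. E u v \<Longrightarrow> E v u" using G unfolding graph_def by blast
  have tree: "is_tree T TE" using td by (rule td_tree)
  have "\<forall>s\<in>\<sigma>. \<exists>U P. RB E l (fst s) (snd s) U P"
  proof
    fix s assume "s \<in> \<sigma>"
    then have "left_robust E l (fst s) (snd s)" using rob by (auto split: prod.splits)
    then show "\<exists>U P. RB E l (fst s) (snd s) U P" by (rule robust_RB)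
  qed
  then obtain Uf where "\<forall>s\<in>\<sigma>. \<exists>P. RB E l (fst s) (snd s) (Uf s) P" by metis
  then obtain Pf where RBs: "\<And>s. s \<in> \<sigma> \<Longrightarrow> RB E l (fst s) (snd s) (Uf s) (Pf s)" by metis
  have Pp: "is_path (fst s) E (Pf s x)" "last (Pf s x) = x" if "s \<in> \<sigma>" "x \<in> fst s \<inter> snd s" for s x
    using RBs[OF that(1)] that(2) unfolding RB_def by blast+
  have Pd: "set (Pf s x) \<inter> set (Pf s y) = {}" if "s \<in> \<sigma>" "x \<in> fst s \<inter> snd s" "y \<in> fst s \<inter> snd s" "x \<noteq> y" for s x y
    using RBs[OF that(1)] that(2-4) unfolding RB_def by blast
  have Pne: "Pf s x \<noteq> []" if "s \<in> \<sigma>" "x \<in> fst s \<inter> snd s" for s x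
    using Pp[OF that] unfolding is_path_def by blast
  have Plast: "x \<in> set (Pf s x)" if "s \<in> \<sigma>" "x \<in> fst s \<inter> snd s" for s x
    using Pp[OF that] Pne[OF that] last_in_set by metis
  have Psub: "set (Pf s x) \<subseteq> fst s" if "s \<in> \<sigma>" "x \<in> fst s \<inter> snd s" for s x
    using Pp[OF that] unfolding is_path_def by blast
  have Psep: "z = x" if "s \<in> \<sigma>" "x \<in> fst s \<inter> snd s" "z \<in> set (Pf s x)" "z \<in> snd s" for s x z
  proof (rule ccontr)
    assume "z \<noteq> x"
    moreover have "z \<in> fst s \<inter> snd s" using Psub[OF that(1,2)] that(3,4) by blast
    ultimately have "set (Pf s z) \<inter> set (Pf s x) = {}" using Pd that(1,2) by blast
    then show False using Plast[OF that(1) \<open>z \<in> fst s \<inter> snd s\<close>] that(3) by blast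
  qed
  define W where "W v = {v} \<union> (\<Union>s\<in>{s\<in>\<sigma>. v \<in> fst s \<inter> snd s}. set (Pf s v))" for v
  have Wdisj: "W u \<inter> W v = {}" if "u \<in> ?I" "v \<in> ?I" "u \<noteq> v" for u v
  proof (rule ccontr)
    assume "W u \<inter> W v \<noteq> {}"
    then obtain z where z: "z \<in> W u" "z \<in> W v" by blast
    have Pin: "z = y" if "y \<in> ?I" "s \<in> \<sigma>" "y \<in> fst s \<inter> snd s" "z \<in> set (Pf s y)" "z \<in> ?I" for y s z
      using Psep[OF that(2,3,4)] int_in[OF that(5) that(2)] by blast
    show False
    proof (cases "z = u")
      case True
      then have zI: "z \<in> ?I" using that by simp
      show ?thesis
      proof (cases "z = v")
        case True then show ?thesis using \<open>z = u\<close> that by simp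
      next
        case False
        then obtain s where s: "s \<in> \<sigma>" "v \<in> fst s \<inter> snd s" "z \<in> set (Pf s v)" using z(2) unfolding W_def by blast
        show ?thesis using Pin[OF that(2) s zI] False by simp
      qed
    next
      case False
      then obtain s where s: "s \<in> \<sigma>" "u \<in> fst s \<inter> snd s" "z \<in> set (Pf s u)" using z(1) unfolding W_def by blast
      show ?thesis
      proof (cases "z = v")
        case True
        then have zI: "z \<in> ?I" using that by simp
        show ?thesis using Pin[OF that(1) s zI] False by simp
      next
        case False
        then obtain s' where s': "s' \<in> \<sigma>" "v \<in> fst s' \<inter> snd s'" "z \<in> set (Pf s' v)" using z(2) unfolding W_def by blast
        show ?thesis
        proof (cases "s = s'")
          case True
          then show ?thesis using Pd[OF s(1,2)] s'(2,3) s(3) that(3) by blast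
        next
          case False
          have "z \<in> fst s" "z \<in> fst s'" using Psub s s' by blast+
          then have "z \<in> snd s'" "z \<in> snd s" using star_cross[OF star s(1) s'(1) False] star_cross[OF star s'(1) s(1)] False by blast+
          then have "z = u" "z = v" using Psep s s' by blast+
          then show ?thesis using that(3) by simp
        qed
      qed
    qed
  qed
  have Wconn: "\<forall>x\<in>W v. \<forall>y\<in>W v. (x,y) \<in> (inrel E (W v))\<^sup>*" for v
  proof -
    have toV: "(x, v) \<in> (inrel E (W v))\<^sup>*" if xW: "x \<in> W v" for x
    proof (cases "x = v")
      case False
      then obtain s where s: "s \<in> \<sigma>" "v \<in> fst s \<inter> snd s" "x \<in> set (Pf s v)" using xW unfolding W_def by blast
      have "set (Pf s v) \<subseteq> W v" unfolding W_def using s by blast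
      then show ?thesis using path_conn[OF Pp(1)[OF s(1,2)] _ sym s(3) Plast[OF s(1,2)]] by blast
    qed simp
    show ?thesis
    proof (intro ballI)
      fix x y assume xy: "x \<in> W v" "y \<in> W v"
      have 1: "(x, v) \<in> (inrel E (W v))\<^sup>*" using toV[OF xy(1)] .
      have "(y, v) \<in> (inrel E (W v))\<^sup>*" using toV[OF xy(2)] .
      then have 2: "(v, y) \<in> (inrel E (W v))\<^sup>*" using inrel_sym[of E] sym by blast
      show "(x, y) \<in> (inrel E (W v))\<^sup>*" using 1 2 by (rule rtrancl_trans)
    qed
  qed
  define bag' where "bag' t = {v \<in> ?I. bag t \<inter> W v \<noteq> {}}" for t
  have vW: "v \<in> W v" for v unfolding W_def by blast
  have td': "tree_decomposition ?I (torso_edges V E \<sigma>) T TE bag'"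
    unfolding tree_decomposition_def
  proof (intro conjI allI impI ballI)
    show "is_tree T TE" by (rule tree)
    show "bag' t \<subseteq> ?I" for t unfolding bag'_def by blast
    show "?I = (\<Union>t\<in>T. bag' t)"
    proof
      show "?I \<subseteq> (\<Union>t\<in>T. bag' t)"
      proof
        fix v assume v: "v \<in> ?I"
        then have "v \<in> V" unfolding star_int_def by blast
        then obtain t where "t \<in> T" "v \<in> bag t" using td_cover[OF td] by blast
        then show "v \<in> (\<Union>t\<in>T. bag' t)" using v vW unfolding bag'_def by blast
      qed
    qed (auto simp: bag'_def)
  next
    fix u v assume e: "torso_edges V E \<sigma> u v"
    note tc = torso_cases[OF e]
    show "\<exists>t\<in>T. u \<in> bag' t \<and> v \<in> bag' t"
    proof (cases "E u v")
      case True
      then obtain t where "t \<in> T" "u \<in> bag t" "v \<in> bag t" using td_edge[OF td] by blast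
      then show ?thesis using tc vW unfolding bag'_def by blast
    next
      case False
      then obtain s where s: "s \<in> \<sigma>" "u \<in> fst s \<inter> snd s" "v \<in> fst s \<inter> snd s" "u \<noteq> v" using tc by blast
      have R: "RB E l (fst s) (snd s) (Uf s) (Pf s)" using RBs s(1) by blast
      have AV: "fst s \<subseteq> V" using star_facts[OF star s(1)] by blast
      obtain Qu where Qu: "RBQ E l (fst s) (snd s) (Uf s) (Pf s u) u Qu" using R s(2) unfolding RB_def by blast
      obtain Qv where Qv: "RBQ E l (fst s) (snd s) (Uf s) (Pf s v) v Qv" using R s(3) unfolding RB_def by blast
      have U: "finite (Uf s)" "card (Uf s) = l" using R unfolding RB_def by blast+
      have Pu: "is_path V E (Pf s u)" using Pp(1)[OF s(1,2)] AV unfolding is_path_def by blast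
      have Pv: "is_path V E (Pf s v)" using Pp(1)[OF s(1,3)] AV unfolding is_path_def by blast
      have uA: "u \<in> fst s" "v \<in> fst s" using s by blast+
      obtain t where t: "t \<in> T" "bag t \<inter> set (Pf s u) \<noteq> {}" "bag t \<inter> set (Pf s v) \<noteq> {}"
        using main_link[OF G td fin l U Pu Pv Pd[OF s(1,2,3,4)]
           RBQ_qfam(2,3,1)[OF Qu AV uA(1)] RBQ_qfam(2,3,1)[OF Qv AV uA(2)]] by blast
      have "set (Pf s u) \<subseteq> W u" "set (Pf s v) \<subseteq> W v" unfolding W_def using s by blast+
      then show ?thesis using t tc unfolding bag'_def by blast
    qed
  next
    fix p i
    assume a: "is_path T TE p \<and> i < length p"
    show "bag' (hd p) \<inter> bag' (last p) \<subseteq> bag' (p!i)"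
    proof
      fix v assume "v \<in> bag' (hd p) \<inter> bag' (last p)"
      then have h1: "bag (hd p) \<inter> W v \<noteq> {}" and h2: "bag (last p) \<inter> W v \<noteq> {}" and "v \<in> ?I" unfolding bag'_def by blast+
      have "bag (p!i) \<inter> W v \<noteq> {}" using convex_conn[OF td Wconn[of v] conjunct1[OF a] h1 h2 conjunct2[OF a]] .
      then show "v \<in> bag' (p!i)" using \<open>v \<in> ?I\<close> unfolding bag'_def by blast
    qed
  qed
  have cardb: "finite (bag' t) \<and> card (bag' t) \<le> w + 1" if t: "t \<in> T" for t
  proof -
    define g where "g v = (SOME z. z \<in> bag t \<inter> W v)" for v
    have g: "g v \<in> bag t \<inter> W v" if vb: "v \<in> bag' t" for v
    proof -
      obtain z where "z \<in> bag t \<inter> W v" using vb unfolding bag'_def by blast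
      then show ?thesis unfolding g_def by (rule someI)
    qed
    have inj: "inj_on g (bag' t)"
    proof (rule inj_onI, rule ccontr)
      fix u v assume uv: "u \<in> bag' t" "v \<in> bag' t" "g u = g v" "u \<noteq> v"
      have "u \<in> ?I" "v \<in> ?I" using uv(1,2) unfolding bag'_def by simp_all
      then have d: "W u \<inter> W v = {}" using Wdisj uv(4) by simp
      have "g u \<in> W u" using g[OF uv(1)] by simp
      moreover have "g u \<in> W v" using g[OF uv(2)] uv(3) by simp
      ultimately show False using d by blast
    qed
    have im: "g ` bag' t \<subseteq> bag t" using g by blast
    have fb: "finite (bag t)" "card (bag t) \<le> w + 1" using fin t by blast+
    have "finite (bag' t)" using inj_on_finite[OF inj im fb(1)] .
    moreover have "card (bag' t) \<le> card (bag t)" using card_inj_on_le[OF inj im fb(1)] .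
    ultimately show ?thesis using fb(2) by linarith
  qed
  show ?thesis using td' cardb by blast
qed



lemma path_map:
  assumes p: "is_path S TE p" and inj: "inj_on g S"
    and edge: "\<And>a b. a \<in> S \<Longrightarrow> b \<in> S \<Longrightarrow> TE a b \<Longrightarrow> TE' (g a) (g b)"
  shows "is_path (g ` S) TE' (map g p)"
  unfolding is_path_def
proof (intro conjI allI impI)
  have sp: "set p \<subseteq> S" "distinct p" "p \<noteq> []" using p unfolding is_path_def by auto
  show "map g p \<noteq> []" using sp by simp
  show "distinct (map g p)" using sp inj by (simp add: distinct_map inj_on_subset)
  show "set (map g p) \<subseteq> g ` S" using sp by auto
  fix i assume i: "Suc i < length (map g p)"
  then have "TE (p!i) (p!Suc i)" "p!i \<in> S" "p!Suc i \<in> S" using p path_edge path_nth_in by fastforce+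
  then show "TE' (map g p ! i) (map g p ! Suc i)" using edge i by simp
qed

lemma td_transfer:
  assumes td: "tree_decomposition V E S TE bag" and inj: "inj_on g S"
  defines "h \<equiv> the_inv_into S g"
  defines "TE2 \<equiv> (\<lambda>i j. i \<in> g ` S \<and> j \<in> g ` S \<and> TE (h i) (h j))"
  shows "tree_decomposition V E (g ` S) TE2 (\<lambda>i. bag (h i))"
proof -
  have tree: "is_tree S TE" using td by (rule td_tree)
  have hg: "h (g x) = x" if "x \<in> S" for x using the_inv_into_f_f[OF inj that] unfolding h_def .
  have gh: "g (h y) = y" if "y \<in> g ` S" for y using f_the_inv_into_f[OF inj that] unfolding h_def .
  have hS: "h y \<in> S" if "y \<in> g ` S" for y using the_inv_into_into[OF inj that] unfolding h_def by simp
  have injh: "inj_on h (g ` S)" by (metis gh inj_onI)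
  have hgS: "h ` g ` S = S" using hg by force
  have toS: "is_path S TE (map h p)" if "is_path (g ` S) TE2 p" for p
  proof -
    have "is_path (h ` g ` S) TE (map h p)"
      by (rule path_map[OF that injh]) (simp add: TE2_def)
    then show ?thesis using hgS by simp
  qed
  have fromS: "is_path (g ` S) TE2 (map g q)" if "is_path S TE q" for q
    by (rule path_map[OF that inj]) (simp add: TE2_def hg)
  have mhg: "map g (map h p) = p" if "set p \<subseteq> g ` S" for p
    using that gh by (induction p) auto
  have pset: "set p \<subseteq> g ` S" if "is_path (g ` S) TE2 p" for p using that unfolding is_path_def by blast
  have gr: "graph (g ` S) TE2"
    unfolding graph_def
  proof (intro allI impI conjI)
    fix u v assume e: "TE2 u v"
    then have uv: "u \<in> g ` S" "v \<in> g ` S" "TE (h u) (h v)" unfolding TE2_def by auto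
    show "u \<in> g ` S" "v \<in> g ` S" using uv by auto
    show "u \<noteq> v" using uv tree_edge[OF tree uv(3)] by auto
    show "TE2 v u" using uv tree_sym[OF tree uv(3)] unfolding TE2_def by auto
  qed
  have ist: "is_tree (g ` S) TE2"
    unfolding is_tree_def
  proof (intro conjI ballI)
    show "graph (g ` S) TE2" by (rule gr)
    show "g ` S \<noteq> {}" using tree unfolding is_tree_def by simp
    fix u v assume uv: "u \<in> g ` S" "v \<in> g ` S"
    let ?q = "tp S TE (h u) (h v)"
    have q: "is_path S TE ?q" "hd ?q = h u" "last ?q = h v" using tp_path[OF tree hS[OF uv(1)] hS[OF uv(2)]] by auto
    have qne: "?q \<noteq> []" using q unfolding is_path_def by simp
    show "\<exists>!p. is_path (g ` S) TE2 p \<and> hd p = u \<and> last p = v"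
    proof (rule ex1I)
      show "is_path (g ` S) TE2 (map g ?q) \<and> hd (map g ?q) = u \<and> last (map g ?q) = v"
        using fromS[OF q(1)] q qne gh uv by (simp add: hd_map last_map)
    next
      fix p assume p: "is_path (g ` S) TE2 p \<and> hd p = u \<and> last p = v"
      have pne: "p \<noteq> []" using p unfolding is_path_def by simp
      have "tp S TE (h u) (h v) = map h p"
        using tp_unique[OF tree toS[OF conjunct1[OF p]]] p pne by (simp add: hd_map last_map)
      then have "map g ?q = map g (map h p)" by simp
      then show "p = map g ?q" using mhg[OF pset[OF conjunct1[OF p]]] by simp
    qed
  qed
  show ?thesis
    unfolding tree_decomposition_def
  proof (intro conjI allI impI ballI)
    show "is_tree (g ` S) TE2" by (rule ist)
    fix t assume "t \<in> g ` S"
    then show "bag (h t) \<subseteq> V" using hS td unfolding tree_decomposition_def by blast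
  next
    have "V = (\<Union>t\<in>S. bag t)" using td unfolding tree_decomposition_def by blast
    also have "\<dots> = (\<Union>i\<in>g ` S. bag (h i))" using hg by force
    finally show "V = (\<Union>i\<in>g ` S. bag (h i))" .
  next
    fix u v assume "E u v"
    then obtain t where t: "t \<in> S" "u \<in> bag t" "v \<in> bag t" using td_edge[OF td] by blast
    then show "\<exists>i\<in>g ` S. u \<in> bag (h i) \<and> v \<in> bag (h i)" using hg by (intro bexI[of _ "g t"]) auto
  next
    fix p i assume a: "is_path (g ` S) TE2 p \<and> i < length p"
    have q: "is_path S TE (map h p)" using toS a by blast
    have pne: "p \<noteq> []" using a unfolding is_path_def by simp
    have il: "i < length (map h p)" using a by simp
    have "bag (hd (map h p)) \<inter> bag (last (map h p)) \<subseteq> bag (map h p ! i)"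
      using td q il unfolding tree_decomposition_def by blast
    then show "bag (h (hd p)) \<inter> bag (h (last p)) \<subseteq> bag (h (p ! i))" using pne a by (simp add: hd_map last_map)
  qed
qed

lemma td_to_nat:
  assumes td: "tree_decomposition V E S TE bag" and fS: "finite S"
    and fin: "\<forall>t\<in>S. finite (bag t) \<and> card (bag t) \<le> k"
  shows "\<exists>(T'::nat set) TE' bag'. tree_decomposition V E T' TE' bag' \<and> (\<forall>t\<in>T'. finite (bag' t) \<and> card (bag' t) \<le> k)"
proof -
  obtain g :: "_ \<Rightarrow> nat" and n where g: "g ` S = {i. i < n}" "inj_on g S" using finite_imp_inj_to_nat_seg[OF fS] by blast
  have "tree_decomposition V E (g ` S) (\<lambda>i j. i \<in> g ` S \<and> j \<in> g ` S \<and> TE (the_inv_into S g i) (the_inv_into S g j))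
     (\<lambda>i. bag (the_inv_into S g i))" using td_transfer[OF td g(2)] by simp
  moreover have "\<forall>t\<in>g ` S. finite (bag (the_inv_into S g t)) \<and> card (bag (the_inv_into S g t)) \<le> k"
    using fin the_inv_into_f_f[OF g(2)] by auto
  ultimately show ?thesis by blast
qed



lemma path_restrict:
  assumes "S \<subseteq> T"
  shows "is_path S (\<lambda>u v. TE u v \<and> u \<in> S \<and> v \<in> S) p \<longleftrightarrow> is_path T TE p \<and> set p \<subseteq> S"
  using assms unfolding is_path_def by (auto dest: nth_mem)

lemma prefix_path:
  assumes tree: "is_tree T TE" and f: "f0 \<in> T" "f \<in> T" and s: "s \<in> set (tp T TE f0 f)"
  shows "\<exists>q. is_path T TE q \<and> hd q = f0 \<and> last q = s \<and> set q \<subseteq> set (tp T TE f0 f)"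
proof -
  let ?P = "tp T TE f0 f"
  have P: "is_path T TE ?P" "hd ?P = f0" using tp_path[OF tree f] by auto
  obtain k where k: "k < length ?P" "?P ! k = s" using s by (auto simp: in_set_conv_nth)
  have "is_path T TE (take (Suc k) ?P)" using path_take[OF P(1)] by simp
  moreover have "hd (take (Suc k) ?P) = f0" using P k by (simp add: hd_take' is_path_def)
  moreover have "last (take (Suc k) ?P) = s" using k by (simp add: last_take')
  moreover have "set (take (Suc k) ?P) \<subseteq> set ?P" by (rule set_take_subset)
  ultimately show ?thesis by blast
qed

lemma side_keep:
  assumes tree: "is_tree T TE" and ac: "TE a c" and q: "is_path T TE q" and cq: "c \<notin> set q"
  shows "side T TE a c (hd q) \<longleftrightarrow> side T TE a c (last q)"
proof
  assume "side T TE a c (hd q)"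
  then show "side T TE a c (last q)" using side_path[OF tree ac q] cq by blast
next
  assume s: "side T TE a c (last q)"
  have r: "is_path T TE (rev q)" using path_rev[OF q tree_sym[OF tree]] .
  have ne: "q \<noteq> []" using q unfolding is_path_def by simp
  show "side T TE a c (hd q)" using side_path[OF tree ac r] cq s ne by (auto simp: hd_rev last_rev)
qed

lemma finite_subtree:
  assumes td: "tree_decomposition V E T TE bag" and fV: "finite V"
    and Ein: "\<And>u v. E u v \<Longrightarrow> u \<in> V \<and> v \<in> V"
  shows "\<exists>S. S \<subseteq> T \<and> finite S \<and> tree_decomposition V E S (\<lambda>u v. TE u v \<and> u \<in> S \<and> v \<in> S) bag"
proof -
  have tree: "is_tree T TE" using td by (rule td_tree)
  obtain f0 where f0: "f0 \<in> T" using tree unfolding is_tree_def by blast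
  define EP where "EP = {(u,v). E u v}"
  have fEP: "finite EP"
  proof -
    have "EP \<subseteq> V \<times> V" unfolding EP_def using Ein by auto
    then show ?thesis using fV finite_subset by blast
  qed
  define nv where "nv v = (SOME t. t \<in> T \<and> v \<in> bag t)" for v
  have nv: "nv v \<in> T \<and> v \<in> bag (nv v)" if vV: "v \<in> V" for v
  proof -
    obtain t where "t \<in> T \<and> v \<in> bag t" using td_cover[OF td vV] by blast
    then show ?thesis unfolding nv_def by (rule someI)
  qed
  define ne where "ne e = (SOME t. t \<in> T \<and> fst e \<in> bag t \<and> snd e \<in> bag t)" for e
  have ne: "ne e \<in> T \<and> fst e \<in> bag (ne e) \<and> snd e \<in> bag (ne e)" if eE: "e \<in> EP" for e
  proof -
    have "E (fst e) (snd e)" using eE unfolding EP_def by auto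
    then obtain t where "t \<in> T \<and> fst e \<in> bag t \<and> snd e \<in> bag t" using td_edge[OF td] by blast
    then show ?thesis unfolding ne_def by (rule someI)
  qed
  define F where "F = insert f0 (nv ` V \<union> ne ` EP)"
  have fF: "finite F" unfolding F_def using fV fEP by simp
  have FT: "F \<subseteq> T" unfolding F_def using f0 nv ne by auto
  define S where "S = (\<Union>f\<in>F. set (tp T TE f0 f))"
  have fS: "finite S" unfolding S_def using fF by simp
  have ST: "S \<subseteq> T"
  proof
    fix x assume "x \<in> S"
    then obtain f where "f \<in> F" "x \<in> set (tp T TE f0 f)" unfolding S_def by blast
    then show "x \<in> T" using tp_path[OF tree f0, of f] FT unfolding is_path_def by blast
  qed
  have FS: "F \<subseteq> S"
  proof
    fix f assume f: "f \<in> F"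
    have "is_path T TE (tp T TE f0 f)" "last (tp T TE f0 f) = f" using tp_path[OF tree f0, of f] FT f by auto
    then have "f \<in> set (tp T TE f0 f)" unfolding is_path_def by (metis last_in_set)
    then show "f \<in> S" unfolding S_def using f by blast
  qed
  have f0S: "f0 \<in> S" using FS unfolding F_def by blast
  have prefS: "\<exists>q. is_path T TE q \<and> hd q = f0 \<and> last q = s \<and> set q \<subseteq> S" if sS: "s \<in> S" for s
  proof -
    obtain f where f: "f \<in> F" "s \<in> set (tp T TE f0 f)" using sS unfolding S_def by blast
    obtain q where "is_path T TE q \<and> hd q = f0 \<and> last q = s \<and> set q \<subseteq> set (tp T TE f0 f)"
      using prefix_path[OF tree f0 _ f(2)] FT f(1) by blast
    then show ?thesis using f unfolding S_def by blast
  qed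
  have conv: "set p \<subseteq> S" if p: "is_path T TE p" and h: "hd p \<in> S" and l: "last p \<in> S" for p
  proof (rule ccontr)
    assume "\<not> set p \<subseteq> S"
    then obtain x where "x \<in> set p" "x \<notin> S" by blast
    then obtain k where k: "k < length p" "p!k \<notin> S" by (metis in_set_conv_nth)
    have pne: "p \<noteq> []" using p unfolding is_path_def by simp
    have k0: "k \<noteq> 0"
    proof
      assume "k = 0"
      then show False using k h pne by (simp add: hd_conv_nth)
    qed
    define i where "i = k - 1"
    have ik: "Suc i = k" using k0 unfolding i_def by simp
    have i: "Suc i < length p" using ik k by simp
    note cs = cut_side[OF tree p i]
    let ?a = "p!i" and ?c = "p!Suc i"
    have cS: "?c \<notin> S" using k ik by simp
    have ac: "TE ?a ?c" using cs by blast
    obtain q1 where q1: "is_path T TE q1" "hd q1 = f0" "last q1 = hd p" "set q1 \<subseteq> S" using prefS[OF h] by blast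
    obtain q2 where q2: "is_path T TE q2" "hd q2 = f0" "last q2 = last p" "set q2 \<subseteq> S" using prefS[OF l] by blast
    have "side T TE ?a ?c (hd p) \<longleftrightarrow> side T TE ?a ?c f0" using side_keep[OF tree ac q1(1)] q1 cS by auto
    moreover have "side T TE ?a ?c (last p) \<longleftrightarrow> side T TE ?a ?c f0" using side_keep[OF tree ac q2(1)] q2 cS by auto
    ultimately show False using cs by blast
  qed
  let ?TE = "\<lambda>u v. TE u v \<and> u \<in> S \<and> v \<in> S"
  have ist: "is_tree S ?TE"
    unfolding is_tree_def
  proof (intro conjI ballI)
    show "graph S ?TE" using tree unfolding graph_def is_tree_def by blast
    show "S \<noteq> {}" using f0S by blast
    fix u v assume uv: "u \<in> S" "v \<in> S"
    let ?q = "tp T TE u v"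
    have q: "is_path T TE ?q" "hd ?q = u" "last ?q = v" using tp_path[OF tree] uv ST by blast+
    have qS: "set ?q \<subseteq> S" using conv[OF q(1)] q uv by simp
    show "\<exists>!p. is_path S ?TE p \<and> hd p = u \<and> last p = v"
    proof (rule ex1I)
      show "is_path S ?TE ?q \<and> hd ?q = u \<and> last ?q = v" using path_restrict[OF ST] q qS by blast
    next
      fix p assume "is_path S ?TE p \<and> hd p = u \<and> last p = v"
      then have "is_path T TE p" "hd p = u" "last p = v" using path_restrict[OF ST] by blast+
      then show "p = ?q" using tp_unique[OF tree] by metis
    qed
  qed
  have "tree_decomposition V E S ?TE bag"
    unfolding tree_decomposition_def
  proof (intro conjI allI impI ballI)
    show "is_tree S ?TE" by (rule ist)
    fix t assume "t \<in> S" then show "bag t \<subseteq> V" using ST td unfolding tree_decomposition_def by blast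
  next
    show "V = (\<Union>t\<in>S. bag t)"
    proof
      show "V \<subseteq> (\<Union>t\<in>S. bag t)"
      proof
        fix v assume "v \<in> V"
        then have "nv v \<in> S" "v \<in> bag (nv v)" using nv FS unfolding F_def by blast+
        then show "v \<in> (\<Union>t\<in>S. bag t)" by blast
      qed
      show "(\<Union>t\<in>S. bag t) \<subseteq> V" using ST td unfolding tree_decomposition_def by blast
    qed
  next
    fix u v assume "E u v"
    then have e: "(u,v) \<in> EP" unfolding EP_def by simp
    then have "ne (u,v) \<in> S" using FS unfolding F_def by blast
    then show "\<exists>t\<in>S. u \<in> bag t \<and> v \<in> bag t" using ne[OF e] by auto
  next
    fix p i assume "is_path S ?TE p \<and> i < length p"
    then have "is_path T TE p" "i < length p" using path_restrict[OF ST] by blast+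
    then show "bag (hd p) \<inter> bag (last p) \<subseteq> bag (p ! i)" using td unfolding tree_decomposition_def by blast
  qed
  then show ?thesis using ST fS by blast
qed

theorem corollary6p3:
  fixes V :: "'a set" and E :: "'a \<Rightarrow> 'a \<Rightarrow> bool"
    and \<sigma> :: "('a set \<times> 'a set) set" and w :: nat
  assumes "graph V E"
    and "treewidth_le TYPE('t) V E w"
    and "is_star V E \<sigma>" and "finite \<sigma>"
    and "\<forall>s\<in>\<sigma>. sep_order s \<le> w + 1"
    and "finite (star_int V \<sigma>)"
    and "\<forall>(A,B)\<in>\<sigma>. left_robust E ((w+1)^2 * (w+2) + w + 1) A B"
  shows "treewidth_le TYPE(nat) (star_int V \<sigma>) (torso_edges V E \<sigma>) w"
proof -
  obtain T :: "'t set" and TE bag where td: "tree_decomposition V E T TE bag"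
    and fin: "\<forall>t\<in>T. finite (bag t) \<and> card (bag t) \<le> w + 1"
    using assms(2) unfolding treewidth_le_def by blast
  have l: "2 * w + 2 < (w+1)^2 * (w+2) + w + 1"
  proof -
    have "w + 2 \<le> (w+1)^2 * (w+2)" by (simp add: power2_eq_square)
    then show ?thesis by linarith
  qed
  obtain bag' where td': "tree_decomposition (star_int V \<sigma>) (torso_edges V E \<sigma>) T TE bag'"
    and fin': "\<forall>t\<in>T. finite (bag' t) \<and> card (bag' t) \<le> w + 1"
    using torso_td[OF assms(1) td fin assms(3) assms(7) l] by blast
  have Ein: "u \<in> star_int V \<sigma> \<and> v \<in> star_int V \<sigma>" if "torso_edges V E \<sigma> u v" for u v
    using that unfolding torso_edges_def by blast
  obtain S where S: "S \<subseteq> T" "finite S" "tree_decomposition (star_int V \<sigma>) (torso_edges V E \<sigma>) S (\<lambda>u v. TE u v \<and> u \<in> S \<and> v \<in> S) bag'"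
    using finite_subtree[OF td' assms(6) Ein] by blast
  have "\<forall>t\<in>S. finite (bag' t) \<and> card (bag' t) \<le> w + 1" using fin' S(1) by blast
  then obtain T' :: "nat set" and TE' bag'' where "tree_decomposition (star_int V \<sigma>) (torso_edges V E \<sigma>) T' TE' bag''"
    "\<forall>t\<in>T'. finite (bag'' t) \<and> card (bag'' t) \<le> w + 1"
    using td_to_nat[OF S(3) S(2)] by blast
  then show ?thesis unfolding treewidth_le_def by blast
qed

end
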